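(* For $1\le t\le m$, any deterministic voting rule that takes top-$t$ preference profiles as input and has bounded utilitarian distortion has metric distortion $\Omega(m-t+1)$.
   Context: Setting: $n$ agents, $m$ alternatives; each agent has an underlying strict ranking, but the rule only receives each agent's ordered list of her top $t$ alternatives (a top-$t$ profile $\vec\sigma_t$). A full profile extends $\vec\sigma_t$ if each agent's top-$t$ prefix coincides with that in $\vec\sigma_t$. Metric framework: a pseudometric $d$ on agents and alternatives is consistent with a full profile $\vec\sigma$ if $X\succ_iY\Rightarrow d(i,X)\le d(i,Y)$, and consistent with $\vec\sigma_t$ if it is consistent with some full profile extending $\vec\sigma_t$. $\mathrm{SC}(X,d)=\sum_id(i,X)$. Metric distortion of a (top-$t$) rule $f$: $\sup_{\vec\sigma_t}\sup_{d}\mathbb E_{X\sim f(\vec\sigma_t)}[\mathrm{SC}(X,d)]/\min_X\mathrm{SC}(X,d)$ over consistent $d$. Utilitarian framework: unit-sum nonnegative utilities $u_i$ ($\sum_Xu_i(X)=1$), consistent with a full profile if $X\succ_iY\Rightarrow u_i(X)\ge u_i(Y)$ and with $\vec\sigma_t$ if consistent with some full extension. $\mathrm{SW}(X,\vec u)=\sum_iu_i(X)$. Utilitarian distortion: $\sup_{\vec\sigma_t}\sup_{\vec u}\max_X\mathrm{SW}(X,\vec u)/\mathbb E_{X\sim f(\vec\sigma_t)}[\mathrm{SW}(X,\vec u)]$; it is bounded if finite. *)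

theory Defs
  imports "HOL-Analysis.Analysis"
begin

(* Alternatives are 0..<m (nat); agents are 0..<n where n = length of the profile.
   A ranking is a list, most preferred first. *)

definition top_list :: "nat \<Rightarrow> nat \<Rightarrow> nat list \<Rightarrow> bool" where
  "top_list m t r \<longleftrightarrow> length r = t \<and> distinct r \<and> set r \<subseteq> {..<m}"

definition full_ranking :: "nat \<Rightarrow> nat list \<Rightarrow> bool" where
  "full_ranking m r \<longleftrightarrow> distinct r \<and> set r = {..<m}"

definition top_profile :: "nat \<Rightarrow> nat \<Rightarrow> nat list list \<Rightarrow> bool" where
  "top_profile m t P \<longleftrightarrow> P \<noteq> [] \<and> (\<forall>r\<in>set P. top_list m t r)"

definition extends_profile :: "nat \<Rightarrow> nat \<Rightarrow> nat list list \<Rightarrow> nat list list \<Rightarrow> bool" where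
  "extends_profile m t F P \<longleftrightarrow> length F = length P \<and>
     (\<forall>i<length P. full_ranking m (F!i) \<and> take t (F!i) = P!i)"

definition prefers :: "nat list \<Rightarrow> nat \<Rightarrow> nat \<Rightarrow> bool" where
  "prefers r X Y \<longleftrightarrow> (\<exists>a b. a < b \<and> b < length r \<and> r!a = X \<and> r!b = Y)"

(* points: Inl i = agent i, Inr X = alternative X *)
definition points :: "nat \<Rightarrow> nat \<Rightarrow> (nat + nat) set" where
  "points n m = Inl ` {..<n} \<union> Inr ` {..<m}"

definition pseudometric_on :: "'p set \<Rightarrow> ('p \<Rightarrow> 'p \<Rightarrow> real) \<Rightarrow> bool" where
  "pseudometric_on S d \<longleftrightarrow>
     (\<forall>x\<in>S. d x x = 0) \<and>
     (\<forall>x\<in>S. \<forall>y\<in>S. 0 \<le> d x y \<and> d x y = d y x) \<and>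
     (\<forall>x\<in>S. \<forall>y\<in>S. \<forall>z\<in>S. d x z \<le> d x y + d y z)"

definition metric_consistent_full :: "nat list list \<Rightarrow> (nat + nat \<Rightarrow> nat + nat \<Rightarrow> real) \<Rightarrow> bool" where
  "metric_consistent_full F d \<longleftrightarrow>
     (\<forall>i<length F. \<forall>X Y. prefers (F!i) X Y \<longrightarrow> d (Inl i) (Inr X) \<le> d (Inl i) (Inr Y))"

definition metric_consistent :: "nat \<Rightarrow> nat \<Rightarrow> nat list list \<Rightarrow> (nat + nat \<Rightarrow> nat + nat \<Rightarrow> real) \<Rightarrow> bool" where
  "metric_consistent m t P d \<longleftrightarrow> pseudometric_on (points (length P) m) d \<and>
     (\<exists>F. extends_profile m t F P \<and> metric_consistent_full F d)"

definition SC :: "nat list list \<Rightarrow> (nat + nat \<Rightarrow> nat + nat \<Rightarrow> real) \<Rightarrow> nat \<Rightarrow> real" where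
  "SC P d X = (\<Sum>i<length P. d (Inl i) (Inr X))"

definition ratio :: "real \<Rightarrow> real \<Rightarrow> ereal" where
  "ratio a b = (if b = 0 then (if a = 0 then 1 else \<infinity>) else ereal (a / b))"

definition metric_distortion :: "nat \<Rightarrow> nat \<Rightarrow> (nat list list \<Rightarrow> nat) \<Rightarrow> ereal" where
  "metric_distortion m t f = (SUP (P, d) \<in> {(P, d). top_profile m t P \<and> metric_consistent m t P d}.
      ratio (SC P d (f P)) (Min (SC P d ` {..<m})))"

definition util_consistent :: "nat \<Rightarrow> nat \<Rightarrow> nat list list \<Rightarrow> (nat \<Rightarrow> nat \<Rightarrow> real) \<Rightarrow> bool" where
  "util_consistent m t P u \<longleftrightarrow>
     (\<forall>i<length P. (\<forall>X<m. 0 \<le> u i X) \<and> (\<Sum>X<m. u i X) = 1) \<and>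
     (\<exists>F. extends_profile m t F P \<and>
        (\<forall>i<length P. \<forall>X Y. prefers (F!i) X Y \<longrightarrow> u i Y \<le> u i X))"

definition SW :: "nat list list \<Rightarrow> (nat \<Rightarrow> nat \<Rightarrow> real) \<Rightarrow> nat \<Rightarrow> real" where
  "SW P u X = (\<Sum>i<length P. u i X)"

definition util_distortion :: "nat \<Rightarrow> nat \<Rightarrow> (nat list list \<Rightarrow> nat) \<Rightarrow> ereal" where
  "util_distortion m t f = (SUP (P, u) \<in> {(P, u). top_profile m t P \<and> util_consistent m t P u}.
      ratio (Max (SW P u ` {..<m})) (SW P u (f P)))"

end

theory Submission
  imports Defs
begin

lemma ext_ok:
  assumes "top_list m t r" "distinct L" "set L = {..<m}"
  shows "full_ranking m (r @ filter (\<lambda>x. x \<notin> set r) L) \<and> take t (r @ filter (\<lambda>x. x \<notin> set r) L) = r"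
proof
  have r: "length r = t" "distinct r" "set r \<subseteq> {..<m}" using assms(1) unfolding top_list_def by auto
  have "distinct (r @ filter (\<lambda>x. x \<notin> set r) L)" using r(2) assms(2) by auto
  moreover have "set (r @ filter (\<lambda>x. x \<notin> set r) L) = {..<m}" using r(3) assms(3) by auto
  ultimately show "full_ranking m (r @ filter (\<lambda>x. x \<notin> set r) L)" unfolding full_ranking_def by simp
  show "take t (r @ filter (\<lambda>x. x \<notin> set r) L) = r" using r(1) by simp
qed

lemma prefers_hd: "distinct (a # rest) \<Longrightarrow> prefers (a # rest) X a \<Longrightarrow> False"
proof -
  assume d: "distinct (a # rest)" and p: "prefers (a # rest) X a"
  then obtain i b where ib: "i < b" "b < length (a # rest)" "(a # rest) ! b = a" by (auto simp: prefers_def)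
  have "(a # rest) ! 0 = a" by simp
  with ib have "b = 0" using nth_eq_iff_index_eq[OF d, of b 0] by simp
  with ib show False by simp
qed

lemma prefers_last: "distinct (xs @ [a]) \<Longrightarrow> prefers (xs @ [a]) a Y \<Longrightarrow> False"
proof -
  assume d: "distinct (xs @ [a])" and p: "prefers (xs @ [a]) a Y"
  then obtain i b where ib: "i < b" "b < length (xs @ [a])" "(xs @ [a]) ! i = a" by (auto simp: prefers_def)
  have "(xs @ [a]) ! length xs = a" by simp
  with ib have "i = length xs" using nth_eq_iff_index_eq[OF d, of i "length xs"] by simp
  with ib show False by simp
qed

lemma md_ge:
  assumes "top_profile m t P" "metric_consistent m t P d"
  shows "ratio (SC P d (f P)) (Min (SC P d ` {..<m})) \<le> metric_distortion m t f"
  unfolding metric_distortion_def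
  by (rule SUP_upper2[where i="(P,d)"]) (use assms in auto)

lemma ud_ge:
  assumes "top_profile m t P" "util_consistent m t P u"
  shows "ratio (Max (SW P u ` {..<m})) (SW P u (f P)) \<le> util_distortion m t f"
  unfolding util_distortion_def
  by (rule SUP_upper2[where i="(P,u)"]) (use assms in auto)

lemma prof:
  assumes "1 \<le> t" "t \<le> m" "k = m - t + 1"
  shows "top_profile m t (map (\<lambda>j. j # [k..<m]) [0..<k])"
  using assms unfolding top_profile_def top_list_def by auto

lemma ext_prof:
  assumes "top_profile m t P" "distinct L" "set L = {..<m}"
  shows "extends_profile m t (map (\<lambda>r. r @ filter (\<lambda>x. x \<notin> set r) L) P) P"
proof -
  have "\<And>i. i < length P \<Longrightarrow> full_ranking m (P!i @ filter (\<lambda>x. x \<notin> set (P!i)) L) \<and> take t (P!i @ filter (\<lambda>x. x \<notin> set (P!i)) L) = P!i"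
  proof -
    fix i assume i: "i < length P"
    then have "top_list m t (P!i)" using assms(1) nth_mem unfolding top_profile_def by auto
    from ext_ok[OF this assms(2,3)] show "full_ranking m (P!i @ filter (\<lambda>x. x \<notin> set (P!i)) L) \<and> take t (P!i @ filter (\<lambda>x. x \<notin> set (P!i)) L) = P!i" .
  qed
  then show ?thesis unfolding extends_profile_def by (simp del: take_append)
qed

lemma fP_lt:
  assumes t1: "1 \<le> t" and tm: "t \<le> m" and kdef: "k = m - t + 1"
    and Pdef: "P = map (\<lambda>j. j # [k..<m]) [0..<k]"
    and ud: "util_distortion m t f < \<infinity>"
  shows "f P < k"
proof (rule ccontr)
  assume "\<not> f P < k"
  hence fk: "k \<le> f P" by simp
  have tp: "top_profile m t P" using prof[OF t1 tm kdef] Pdef by simp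
  have lenP: "length P = k" using Pdef by simp
  have Pi: "\<And>i. i < k \<Longrightarrow> P!i = i # [k..<m]" using Pdef by simp
  define u where "u = (\<lambda>(i::nat) (Y::nat). if Y = i then (1::real) else 0)"
  define F where "F = map (\<lambda>r. r @ filter (\<lambda>x. x \<notin> set r) [0..<m]) P"
  have ext: "extends_profile m t F P" unfolding F_def by (rule ext_prof[OF tp]) auto
  have c1: "\<forall>i<length P. (\<forall>X<m. 0 \<le> u i X) \<and> (\<Sum>X<m. u i X) = 1"
  proof (intro allI impI conjI)
    fix i X assume "i < length P" "X < m"
    show "0 \<le> u i X" by (simp add: u_def)
  next
    fix i assume i: "i < length P"
    have "i < m" using i lenP kdef tm t1 by simp
    then show "(\<Sum>X<m. u i X) = 1" unfolding u_def by (simp add: sum.delta)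
  qed
  have c2: "\<forall>i<length P. \<forall>X Y. prefers (F!i) X Y \<longrightarrow> u i Y \<le> u i X"
  proof (intro allI impI)
    fix i X Y assume i: "i < length P" and p: "prefers (F!i) X Y"
    show "u i Y \<le> u i X"
    proof (cases "Y = i")
      case True
      have d: "distinct (F!i)" using ext i unfolding extends_profile_def full_ranking_def by auto
      have Fi: "F!i = i # ([k..<m] @ filter (\<lambda>x. x \<notin> set (P!i)) [0..<m])"
        using i lenP Pi unfolding F_def by simp
      have "False" using prefers_hd[of i "[k..<m] @ filter (\<lambda>x. x \<notin> set (P!i)) [0..<m]" X]
        d p True unfolding Fi by blast
      then show ?thesis ..
    qed (simp add: u_def)
  qed
  have uc: "util_consistent m t P u"
    unfolding util_consistent_def using c1 c2 ext by blast
  have sw0: "SW P u (f P) = 0" using fk lenP unfolding SW_def u_def by (intro sum.neutral) auto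
  have s1: "SW P u 0 = 1" using lenP kdef unfolding SW_def u_def by (simp add: sum.delta')
  have "0 < m" using t1 tm by simp
  hence "SW P u 0 \<in> SW P u ` {..<m}" by simp
  from Max_ge[OF finite_imageI[OF finite_lessThan] this] s1
  have "1 \<le> Max (SW P u ` {..<m})" by simp
  hence "ratio (Max (SW P u ` {..<m})) (SW P u (f P)) = \<infinity>" using sw0 unfolding ratio_def by auto
  with ud_ge[OF tp uc, of f] ud show False by simp
qed

lemma big:
  assumes t1: "1 \<le> t" and tm: "t \<le> m" and kdef: "k = m - t + 1" and k2: "2 \<le> k"
    and Pdef: "P = map (\<lambda>j. j # [k..<m]) [0..<k]"
    and fk: "f P < k"
  shows "ereal (real k - 1) \<le> metric_distortion m t f"
proof -
  define j where "j = f P"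
  have jk: "j < k" using fk j_def by simp
  have km: "k \<le> m" using kdef t1 tm by simp
  have jm: "j < m" using jk km by simp
  have tp: "top_profile m t P" using prof[OF t1 tm kdef] Pdef by simp
  have lenP: "length P = k" using Pdef by simp
  have Pi: "\<And>i. i < k \<Longrightarrow> P!i = i # [k..<m]" using Pdef by simp
  define pos :: "nat + nat \<Rightarrow> real" where
    "pos = case_sum (\<lambda>i. if i = j then 1 else 0) (\<lambda>X. if X = j then 1 else 0)"
  define d where "d = (\<lambda>p q. \<bar>pos p - pos q\<bar>)"
  have dI: "\<And>i X. d (Inl i) (Inr X) = (if i = j then (if X = j then 0 else 1) else (if X = j then 1 else 0))"
    unfolding d_def pos_def by simp
  define L where "L = filter (\<lambda>x. x \<noteq> j) [0..<m] @ [j]"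
  have Ld: "distinct L" unfolding L_def by simp
  have Ls: "set L = {..<m}" unfolding L_def using jm by auto
  define F where "F = map (\<lambda>r. r @ filter (\<lambda>x. x \<notin> set r) L) P"
  have ext: "extends_profile m t F P" unfolding F_def by (rule ext_prof[OF tp Ld Ls])
  have pm: "pseudometric_on (points (length P) m) d"
    unfolding pseudometric_on_def d_def by auto
  have mc: "metric_consistent_full F d"
    unfolding metric_consistent_full_def
  proof (intro allI impI)
    fix i X Y assume iF: "i < length F" and p: "prefers (F!i) X Y"
    have i: "i < k" using iF lenP unfolding F_def by simp
    have dF: "distinct (F!i)" using ext i lenP unfolding extends_profile_def full_ranking_def by auto
    show "d (Inl i) (Inr X) \<le> d (Inl i) (Inr Y)"
    proof (cases "i = j")
      case True
      show ?thesis
      proof (cases "Y = j")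
        case True
        have Fi: "F!i = i # ([k..<m] @ filter (\<lambda>x. x \<notin> set (P!i)) L)"
          using i lenP Pi unfolding F_def by simp
        have "False" using prefers_hd[of i "[k..<m] @ filter (\<lambda>x. x \<notin> set (P!i)) L" X]
          dF p True \<open>i = j\<close> unfolding Fi by blast
        then show ?thesis ..
      qed (simp add: dI True)
    next
      case False
      show ?thesis
      proof (cases "X = j")
        case True
        have jn: "j \<notin> set (P!i)" using Pi[OF i] False jk by auto
        have Fi: "F!i = (i # [k..<m] @ filter (\<lambda>x. x \<notin> set (P!i)) (filter (\<lambda>x. x \<noteq> j) [0..<m])) @ [j]"
          using i lenP Pi[OF i] jn unfolding F_def L_def by simp
        have "False" using prefers_last[of "i # [k..<m] @ filter (\<lambda>x. x \<notin> set (P!i)) (filter (\<lambda>x. x \<noteq> j) [0..<m])" j Y]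
          dF p True unfolding Fi by blast
        then show ?thesis ..
      qed (simp add: dI False)
    qed
  qed
  have mcons: "metric_consistent m t P d"
    unfolding metric_consistent_def using pm ext mc by blast
  have scj: "SC P d j = real k - 1"
  proof -
    have "SC P d j = (\<Sum>i<k. if i = j then 0 else 1)" unfolding SC_def lenP dI by simp
    also have "\<dots> = (\<Sum>i\<in>{..<k} - {j}. 1)" by (rule sum.mono_neutral_cong_right) auto
    also have "\<dots> = real k - 1" using jk by simp
    finally show ?thesis .
  qed
  have scX: "\<And>X. X \<noteq> j \<Longrightarrow> SC P d X = 1"
  proof -
    fix X assume "X \<noteq> j"
    then have "SC P d X = (\<Sum>i<k. if i = j then 1 else 0)" unfolding SC_def lenP dI by simp
    also have "\<dots> = 1" using jk by (simp add: sum.delta')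
    finally show "SC P d X = 1" .
  qed
  define X0 where "X0 = (if j = 0 then 1 else (0::nat))"
  have X0: "X0 < m" "X0 \<noteq> j" using k2 km unfolding X0_def by auto
  have mn: "Min (SC P d ` {..<m}) = 1"
  proof (rule Min_eqI)
    show "finite (SC P d ` {..<m})" by simp
    show "1 \<in> SC P d ` {..<m}" using X0 scX[OF X0(2)] by force
    fix y assume "y \<in> SC P d ` {..<m}"
    then obtain X where "y = SC P d X" by auto
    then show "1 \<le> y" using scj scX k2 by (cases "X = j") auto
  qed
  have "ratio (SC P d (f P)) (Min (SC P d ` {..<m})) = ereal (real k - 1)"
    unfolding mn j_def[symmetric] scj ratio_def by simp
  with md_ge[OF tp mcons, of f] show ?thesis by simp
qed

theorem mainTheorem8:
  shows "\<exists>c::real. c > 0 \<and>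
    (\<forall>m t (f :: nat list list \<Rightarrow> nat).
       1 \<le> t \<and> t \<le> m \<and>
       (\<forall>P. top_profile m t P \<longrightarrow> f P < m) \<and>
       util_distortion m t f < \<infinity>
       \<longrightarrow> ereal (c * real (m - t + 1)) \<le> metric_distortion m t f)"
proof (intro exI conjI allI impI)
  show "(1/2::real) > 0" by simp
  fix m t and f :: "nat list list \<Rightarrow> nat"
  assume a: "1 \<le> t \<and> t \<le> m \<and> (\<forall>P. top_profile m t P \<longrightarrow> f P < m) \<and> util_distortion m t f < \<infinity>"
  then have t1: "1 \<le> t" and tm: "t \<le> m" and ud: "util_distortion m t f < \<infinity>" by auto
  define k where "k = m - t + 1"
  define P where "P = map (\<lambda>j. j # [k..<m]) [0..<k]"
  have tp: "top_profile m t P" using prof[OF t1 tm k_def] P_def by simp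
  show "ereal (1/2 * real (m - t + 1)) \<le> metric_distortion m t f"
  proof (cases "k = 1")
    case False
    then have k2: "2 \<le> k" using k_def by simp
    have fk: "f P < k" by (rule fP_lt[where f=f, OF t1 tm k_def P_def ud])
    have "ereal (real k - 1) \<le> metric_distortion m t f" by (rule big[where f=f, OF t1 tm k_def k2 P_def fk])
    moreover have "1/2 * real (m - t + 1) \<le> real k - 1" using k2 k_def by simp
    ultimately show ?thesis by (meson ereal_less_eq(3) order_trans)
  next
    case True
    define d :: "nat + nat \<Rightarrow> nat + nat \<Rightarrow> real" where "d = (\<lambda>p q. 0)"
    define F where "F = map (\<lambda>r. r @ filter (\<lambda>x. x \<notin> set r) [0..<m]) P"
    have ext: "extends_profile m t F P" unfolding F_def by (rule ext_prof[OF tp]) auto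
    have mcons: "metric_consistent m t P d"
      unfolding metric_consistent_def metric_consistent_full_def pseudometric_on_def d_def
      using ext by auto
    have sc: "\<And>X. SC P d X = 0" unfolding SC_def d_def by simp
    have "0 < m" using t1 tm by simp
    then have "SC P d ` {..<m} = {0}" using sc by auto
    then have "ratio (SC P d (f P)) (Min (SC P d ` {..<m})) = 1" using sc unfolding ratio_def by simp
    with md_ge[OF tp mcons, of f] have "1 \<le> metric_distortion m t f" by simp
    moreover have "1/2 * real (m - t + 1) \<le> 1" using True k_def by simp
    ultimately show ?thesis by (metis ereal_less_eq(3) one_ereal_def order_trans)
  qed
qed

end
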